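(* Let $q,K,L,T$ be positive integers and let $\boldsymbol{\alpha}^{(p)}\in\mathbb{Z}_q^K$, $\boldsymbol{\beta}^{(p)}\in\mathbb{Z}_q^L$ be arbitrary. Suppose $\boldsymbol{\alpha}^{(s)}=(b_\alpha+jx_\alpha)_{j=0}^{T-1}\bmod q$ and $\boldsymbol{\beta}^{(s)}=(b_\beta+jx_\beta)_{j=0}^{T-1}\bmod q$ are arithmetic progressions in $\mathbb{Z}_q$ whose common differences $x_\alpha,x_\beta$ are coprime to $q$. Let $N=|\mathcal{TL}\cup\mathcal{TR}\cup\mathcal{BL}\cup\mathcal{BR}|$. Then for every prime $p$ with $q\mid p-1$ there exist $N$ $q$-th roots of unity $\boldsymbol\rho=(\rho_1,\dots,\rho_N)$ in $\mathbb{F}_p$ such that (a) $\mathbf V(\boldsymbol\rho,\boldsymbol\gamma)$ is invertible and (b) all $T\times T$ submatrices of $\mathbf V(\boldsymbol\rho,\boldsymbol{\alpha}^{(s)})$ and of $\mathbf V(\boldsymbol\rho,\boldsymbol{\beta}^{(s)})$ are invertible.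
   Context: $\mathbb{Z}_q$ denotes the integers mod $q$. For a vector $\mathbf v$, $\{\mathbf v\}$ is the set of its entries; sumsets are $\mathcal A+\mathcal B=\{a+b:a\in\mathcal A,b\in\mathcal B\}$ with addition in $\mathbb{Z}_q$. $\mathcal{TL}=\{\boldsymbol{\alpha}^{(p)}\}+\{\boldsymbol{\beta}^{(p)}\}$, $\mathcal{TR}=\{\boldsymbol{\alpha}^{(p)}\}+\{\boldsymbol{\beta}^{(s)}\}$, $\mathcal{BL}=\{\boldsymbol{\alpha}^{(s)}\}+\{\boldsymbol{\beta}^{(p)}\}$, $\mathcal{BR}=\{\boldsymbol{\alpha}^{(s)}\}+\{\boldsymbol{\beta}^{(s)}\}$, and $\boldsymbol\gamma$ lists the elements of $\mathcal{TL}\cup\mathcal{TR}\cup\mathcal{BL}\cup\mathcal{BR}$ in ascending order (identifying $\mathbb{Z}_q$ with $\{0,\dots,q-1\}$). For a vector $\boldsymbol\rho$ of length $n$ of $q$-th roots of unity and $\boldsymbol\delta\in\mathbb{Z}_q^m$, $\mathbf V(\boldsymbol\rho,\boldsymbol\delta)$ is the $n\times m$ matrix with $(i,j)$ entry $\rho_i^{\delta_j}$ (well defined since $\rho_i^q=1$). *)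

theory Defs
  imports "Berlekamp_Zassenhaus.Finite_Field" "Jordan_Normal_Form.Matrix" "Jordan_Normal_Form.DL_Submatrix"
begin

(* Elements of Z_q are represented by naturals in {0..<q}. *)

definition sumset_mod :: "nat \<Rightarrow> nat list \<Rightarrow> nat list \<Rightarrow> nat set" where
  "sumset_mod q as bs = {(a + b) mod q | a b. a \<in> set as \<and> b \<in> set bs}"

definition arith_prog :: "nat \<Rightarrow> nat \<Rightarrow> nat \<Rightarrow> nat \<Rightarrow> nat list" where
  "arith_prog q b x T = map (\<lambda>j. (b + j * x) mod q) [0..<T]"

definition vandermonde_like :: "'a::semiring_1 list \<Rightarrow> nat list \<Rightarrow> 'a mat" where
  "vandermonde_like \<rho> \<delta> = mat (length \<rho>) (length \<delta>) (\<lambda>(i, j). (\<rho> ! i) ^ (\<delta> ! j))"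

definition gamma_vec :: "nat \<Rightarrow> nat list \<Rightarrow> nat list \<Rightarrow> nat list \<Rightarrow> nat list \<Rightarrow> nat list" where
  "gamma_vec q ap bp as bs = sorted_list_of_set
     (sumset_mod q ap bp \<union> sumset_mod q ap bs \<union> sumset_mod q as bp \<union> sumset_mod q as bs)"

end

theory Submission
  imports Defs "HOL-Computational_Algebra.Polynomial" "HOL-Number_Theory.Cong" "Jordan_Normal_Form.Determinant"
begin

lemma few_roots:
  fixes c :: "nat \<Rightarrow> 'a::field" and g :: "nat \<Rightarrow> nat"
  assumes J: "finite J" and inj: "inj_on g J" and lt: "\<forall>j\<in>J. g j < d"
    and jj: "jj \<in> J" and c0: "c jj \<noteq> 0"
  shows "card {x. (\<Sum>j\<in>J. c j * x ^ g j) = 0} < d"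
proof -
  define P where "P = (\<Sum>j\<in>J. monom (c j) (g j))"
  have ev: "poly P x = (\<Sum>j\<in>J. c j * x ^ g j)" for x
    unfolding P_def poly_sum by (simp add: poly_monom)
  have "coeff P (g jj) = (\<Sum>j\<in>J. if g j = g jj then c j else 0)"
    unfolding P_def coeff_sum by simp
  also have "\<dots> = (\<Sum>j\<in>J. if j = jj then c j else 0)"
    by (rule sum.cong) (use inj jj in \<open>auto dest: inj_onD\<close>)
  also have "\<dots> = c jj" using J jj by simp
  finally have "P \<noteq> 0" using c0 by auto
  have d1: "d \<ge> 1" using lt jj by fastforce
  have "degree P \<le> d - 1"
  proof (rule degree_le, intro allI impI)
    fix i assume "d - 1 < i"
    then show "coeff P i = 0" unfolding P_def coeff_sum using lt d1
      by (intro sum.neutral) fastforce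
  qed
  moreover have "card {x. poly P x = 0} \<le> degree P"
    by (rule card_poly_roots_bound[OF \<open>P \<noteq> 0\<close>])
  ultimately show ?thesis using d1 unfolding ev by linarith
qed

lemma pow_mod_q:
  fixes r :: "'a::comm_monoid_mult"
  assumes "r ^ q = 1"
  shows "r ^ n = r ^ (n mod q)"
proof -
  have "r ^ n = r ^ (q * (n div q) + n mod q)" by simp
  also have "\<dots> = (r ^ q) ^ (n div q) * r ^ (n mod q)"
    by (simp only: power_add power_mult)
  finally show ?thesis using assms by simp
qed

lemma fermat_field:
  fixes a :: "'a::{field,finite}"
  assumes a: "a \<noteq> 0"
  shows "a ^ (CARD('a) - 1) = 1"
proof -
  define Z where "Z = (UNIV :: 'a set) - {0}"
  have cZ: "card Z = CARD('a) - 1" unfolding Z_def by (simp add: card_Diff_subset)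
  have bij: "bij_betw (\<lambda>x. a * x) Z Z"
  proof (rule bij_betw_imageI)
    show "inj_on (\<lambda>x. a * x) Z" using a by (auto intro: inj_onI)
    show "(\<lambda>x. a * x) ` Z = Z"
    proof
      show "(\<lambda>x. a * x) ` Z \<subseteq> Z" using a unfolding Z_def by auto
      show "Z \<subseteq> (\<lambda>x. a * x) ` Z"
      proof
        fix y assume "y \<in> Z"
        then have "y = a * (y / a)" "y / a \<in> Z" using a unfolding Z_def by auto
        then show "y \<in> (\<lambda>x. a * x) ` Z" by blast
      qed
    qed
  qed
  have "prod (\<lambda>x. x) Z = prod (\<lambda>x. a * x) Z"
    using prod.reindex_bij_betw[OF bij, of "\<lambda>x. x"] by simp
  also have "\<dots> = a ^ card Z * prod (\<lambda>x. x) Z" by (simp add: prod.distrib)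
  finally have "1 * prod (\<lambda>x. x) Z = a ^ card Z * prod (\<lambda>x. x) Z" by simp
  moreover have "prod (\<lambda>x. x) Z \<noteq> 0" unfolding Z_def by simp
  ultimately have "a ^ card Z = 1" by (metis mult_right_cancel)
  then show ?thesis using cZ by simp
qed

lemma many_roots:
  assumes q: "q dvd CARD('p::prime_card) - 1" "q > 0"
  shows "q \<le> card {r::'p mod_ring. r ^ q = 1}"
proof -
  let ?n = "CARD('p) - 1"
  define m where "m = ?n div q"
  have nm: "?n = q * m" using q unfolding m_def by simp
  have "CARD('p) \<ge> 2" using prime_card[where 'a='p] by (simp add: prime_ge_2_nat)
  then have m1: "m \<ge> 1" using nm by (cases m) auto
  define R where "R = {r::'p mod_ring. r ^ q = 1}"
  define Z where "Z = (UNIV :: 'p mod_ring set) - {0}"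
  have cZ: "card Z = ?n" unfolding Z_def by (simp add: card_Diff_subset)
  have ferm: "a ^ ?n = 1" if "a \<noteq> 0" for a :: "'p mod_ring"
    using fermat_field[OF that] by simp
  have sub: "Z \<subseteq> (\<Union>c\<in>R. {a. a ^ m = c})"
  proof
    fix a assume "a \<in> Z"
    then have "(a ^ m) ^ q = 1" using ferm[of a] nm unfolding Z_def
      by (simp add: power_mult[symmetric] mult.commute)
    then show "a \<in> (\<Union>c\<in>R. {a. a ^ m = c})" unfolding R_def by auto
  qed
  have fib: "card {a::'p mod_ring. a ^ m = c} \<le> m" for c
  proof -
    let ?cf = "\<lambda>j. if j = m then 1 else - c :: 'p mod_ring"
    have "card {x. (\<Sum>j\<in>{0,m}. ?cf j * x ^ id j) = 0} < m + 1"
      by (rule few_roots[where J="{0,m}" and g=id and d="m+1" and jj=m]) (use m1 in auto)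
    moreover have "{x. (\<Sum>j\<in>{0,m}. ?cf j * x ^ id j) = 0} = {a. a ^ m = c}"
      using m1 by (auto simp: algebra_simps)
    ultimately show ?thesis by simp
  qed
  have "card Z \<le> card (\<Union>c\<in>R. {a. a ^ m = c})" by (rule card_mono[OF _ sub]) simp
  also have "\<dots> \<le> (\<Sum>c\<in>R. card {a. a ^ m = c})" by (rule card_UN_le) simp
  also have "\<dots> \<le> (\<Sum>c\<in>R. m)" by (rule sum_mono) (rule fib)
  also have "\<dots> = card R * m" by simp
  finally have "q * m \<le> card R * m" using cZ nm by simp
  then show ?thesis unfolding R_def using m1 by simp
qed

lemma det_ne0_invertible:
  fixes A :: "'a::field mat"
  assumes A: "A \<in> carrier_mat n n" and d: "det A \<noteq> 0"
  shows "invertible_mat A"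
proof -
  have "A \<in> Units (ring_mat TYPE('a) n undefined)" by (rule det_non_zero_imp_unit[OF A d])
  then obtain B where B: "B \<in> carrier_mat n n" "B * A = 1\<^sub>m n" "A * B = 1\<^sub>m n"
    unfolding Units_def ring_mat_simps by auto
  then show ?thesis using A unfolding invertible_mat_def inverts_mat_def square_mat.simps
    by (metis carrier_matD)
qed

lemma vdm_carrier: "vandermonde_like \<rho> \<delta> \<in> carrier_mat (length \<rho>) (length \<delta>)"
  unfolding vandermonde_like_def by simp

lemma vdm_index: "i < length \<rho> \<Longrightarrow> j < length \<delta> \<Longrightarrow> vandermonde_like \<rho> \<delta> $$ (i, j) = (\<rho> ! i) ^ (\<delta> ! j)"
  unfolding vandermonde_like_def by simp

lemma build_rows:
  fixes \<gamma> :: "nat list"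
  assumes dist: "distinct \<gamma>" and lt: "\<forall>e\<in>set \<gamma>. e < q"
    and R: "q \<le> card {r::'a::{field,finite}. r ^ q = 1}"
  shows "k \<le> length \<gamma> \<Longrightarrow> \<exists>\<rho> :: 'a list. length \<rho> = k \<and> (\<forall>r\<in>set \<rho>. r ^ q = 1) \<and>
     det (vandermonde_like \<rho> (take k \<gamma>)) \<noteq> 0"
proof (induction k)
  case 0
  have "det (vandermonde_like ([]::'a list) (take 0 \<gamma>)) = 1"
    by (rule det_dim_zero) (use vdm_carrier[of "[]::'a list" "take 0 \<gamma>"] in simp)
  then show ?case by (intro exI[of _ "[]"]) simp
next
  case (Suc k)
  then obtain \<rho> :: "'a list" where \<rho>: "length \<rho> = k" "\<forall>r\<in>set \<rho>. r ^ q = 1"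
    "det (vandermonde_like \<rho> (take k \<gamma>)) \<noteq> 0" by auto
  have k: "k < length \<gamma>" using Suc by simp
  define A where "A r = vandermonde_like (\<rho> @ [r]) (take (Suc k) \<gamma>)" for r
  have Ac: "A r \<in> carrier_mat (Suc k) (Suc k)" for r
    unfolding A_def using vdm_carrier[of "\<rho> @ [r]" "take (Suc k) \<gamma>"] \<rho>(1) k by simp
  define c where "c j = cofactor (A 0) k j" for j
  have del: "mat_delete (A r) k j = mat_delete (A 0) k j" for r j
    by (rule eq_matI) (use \<rho>(1) k in \<open>auto simp: mat_delete_def A_def vandermonde_like_def nth_append\<close>)
  have del_k: "mat_delete (A 0) k k = vandermonde_like \<rho> (take k \<gamma>)"
    by (rule eq_matI) (use \<rho>(1) k in \<open>auto simp: mat_delete_def A_def vandermonde_like_def nth_append\<close>)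
  have detA: "det (A r) = (\<Sum>j\<in>{..<Suc k}. c j * r ^ (\<gamma> ! j))" for r
  proof -
    have "det (A r) = (\<Sum>j<Suc k. A r $$ (k, j) * cofactor (A r) k j)"
      by (rule laplace_expansion_row[OF Ac]) simp
    also have "\<dots> = (\<Sum>j<Suc k. c j * r ^ (\<gamma> ! j))"
    proof (rule sum.cong)
      fix j assume "j \<in> {..<Suc k}"
      then have "A r $$ (k, j) = r ^ (\<gamma> ! j)"
        unfolding A_def using \<rho>(1) k by (simp add: vandermonde_like_def nth_append)
      moreover have "cofactor (A r) k j = c j" unfolding c_def cofactor_def by (subst del) (rule refl)
      ultimately show "A r $$ (k, j) * cofactor (A r) k j = c j * r ^ (\<gamma> ! j)" by simp
    qed simp
    finally show ?thesis .
  qed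
  have ck: "c k \<noteq> 0" unfolding c_def cofactor_def del_k using \<rho>(3) by simp
  have "card {x. (\<Sum>j\<in>{..<Suc k}. c j * x ^ (\<gamma> ! j)) = 0} < q"
  proof (rule few_roots[where jj=k])
    show "inj_on ((!) \<gamma>) {..<Suc k}" using dist k
      by (auto simp: inj_on_def nth_eq_iff_index_eq)
    show "\<forall>j\<in>{..<Suc k}. \<gamma> ! j < q" using lt k by auto
  qed (use ck in auto)
  then have "\<not> {r::'a. r ^ q = 1} \<subseteq> {x. (\<Sum>j\<in>{..<Suc k}. c j * x ^ (\<gamma> ! j)) = 0}"
    using R card_mono[of "{x. (\<Sum>j\<in>{..<Suc k}. c j * x ^ (\<gamma> ! j)) = 0}" "{r::'a. r ^ q = 1}"]
    by auto
  then obtain r where r: "r ^ q = 1" "det (A r) \<noteq> 0" unfolding detA by auto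
  show ?case
    by (intro exI[of _ "\<rho> @ [r]"]) (use \<rho> r in \<open>auto simp: A_def\<close>)
qed

lemma pick_interval: "j < T \<Longrightarrow> pick {0..<T} j = j"
proof (induction j)
  case 0
  then show ?case by (auto intro: Least_equality)
next
  case (Suc j)
  then show ?case by (auto intro!: Least_equality)
qed

lemma arith_prog_length: "length (arith_prog q b x T) = T"
  unfolding arith_prog_def by simp

lemma arith_prog_nth: "j < T \<Longrightarrow> arith_prog q b x T ! j = (b + j * x) mod q"
  unfolding arith_prog_def by simp

lemma distinct_rows:
  fixes \<rho> :: "'a::field list"
  assumes "det (vandermonde_like \<rho> \<gamma>) \<noteq> 0" "length \<gamma> = length \<rho>"
  shows "distinct \<rho>"
proof (rule ccontr)
  assume "\<not> distinct \<rho>"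
  then obtain i j where ij: "i \<noteq> j" "i < length \<rho>" "j < length \<rho>" "\<rho> ! i = \<rho> ! j"
    by (auto simp: distinct_conv_nth)
  have "det (vandermonde_like \<rho> \<gamma>) = 0"
    by (rule det_identical_rows[OF _ ij(1-3)]) 
      (use vdm_carrier[of \<rho> \<gamma>] assms(2) ij in \<open>auto intro!: eq_vecI simp: vandermonde_like_def\<close>)
  then show False using assms by simp
qed

lemma part_b:
  fixes \<rho> :: "'a::{field,finite} list"
  assumes dist: "distinct \<rho>" and rq: "\<forall>r\<in>set \<rho>. r ^ q = 1" and q: "q > 0"
    and cop: "coprime x q" and I: "I \<subseteq> {0..<length \<rho>}" and cI: "card I = T"
  shows "invertible_mat (submatrix (vandermonde_like \<rho> (arith_prog q b x T)) I {0..<T})"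
proof -
  define V where "V = vandermonde_like \<rho> (arith_prog q b x T)"
  define M where "M = submatrix V I {0..<T}"
  have dV: "dim_row V = length \<rho>" "dim_col V = T"
    unfolding V_def vandermonde_like_def by (simp_all add: arith_prog_length)
  have r1: "{i. i < length \<rho> \<and> i \<in> I} = I" using I by auto
  have c1: "{j. j < T \<and> j \<in> {0..<T}} = {0..<T}" by auto
  have "dim_row M = card {i. i < dim_row V \<and> i \<in> I}" unfolding M_def by (rule dim_submatrix(1))
  also have "\<dots> = T" by (simp only: dV r1 cI)
  finally have dM1: "dim_row M = T" .
  have "dim_col M = card {j. j < dim_col V \<and> j \<in> {0..<T}}" unfolding M_def by (rule dim_submatrix(2))
  also have "\<dots> = T" by (simp only: dV c1 card_atLeastLessThan diff_zero)
  finally have dM2: "dim_col M = T" .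
  have Mc: "M \<in> carrier_mat T T" by (rule carrier_matI[OF dM1 dM2])
  have pk: "pick I i \<in> I" if "i < T" for i using pick_in_set[of i I] that cI by simp
  have pkl: "pick I i < length \<rho>" if "i < T" for i using subsetD[OF I pk[OF that]] by simp
  have Mij: "M $$ (i, j) = (\<rho> ! pick I i) ^ b * ((\<rho> ! pick I i) ^ x) ^ j" if "i < T" "j < T" for i j
  proof -
    have "M $$ (i, j) = V $$ (pick I i, pick {0..<T} j)"
      unfolding M_def by (rule submatrix_index) (use that dV r1 c1 cI in auto)
    also have "\<dots> = (\<rho> ! pick I i) ^ ((b + j * x) mod q)"
      unfolding V_def using that pkl[OF that(1)]
      by (simp add: pick_interval vdm_index arith_prog_length arith_prog_nth)
    also have "\<dots> = (\<rho> ! pick I i) ^ (b + j * x)"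
      by (rule pow_mod_q[symmetric]) (use rq nth_mem[OF pkl[OF that(1)]] in blast)
    also have "\<dots> = (\<rho> ! pick I i) ^ b * ((\<rho> ! pick I i) ^ x) ^ j"
      by (simp only: power_add power_mult mult.commute[of j x])
    finally show ?thesis .
  qed
  obtain u where u: "[x * u = Suc 0] (mod q)" using cong_solve_coprime_nat[of x q] cop by (simp; blast)
  have inj_pow: "a = c" if "a \<in> set \<rho>" "c \<in> set \<rho>" "a ^ x = c ^ x" for a c
  proof -
    have "a ^ (x * u) = c ^ (x * u)" using that(3) by (simp add: power_mult)
    moreover have "a ^ (x * u) = a" if "a \<in> set \<rho>" for a
    proof -
      have "a ^ (x * u) = a ^ ((x * u) mod q)" by (rule pow_mod_q) (use rq that in auto)
      also have "\<dots> = a ^ (Suc 0 mod q)" using u by (simp add: cong_def)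
      also have "\<dots> = a" by (subst pow_mod_q[symmetric]) (use rq that in auto)
      finally show ?thesis .
    qed
    ultimately show ?thesis using that by metis
  qed
  define y where "y i = (\<rho> ! pick I i) ^ x" for i
  have inj_y: "inj_on y {..<T}"
  proof (rule inj_onI)
    fix i j assume ij: "i \<in> {..<T}" "j \<in> {..<T}" "y i = y j"
    then have "\<rho> ! pick I i = \<rho> ! pick I j"
      using inj_pow[of "\<rho> ! pick I i" "\<rho> ! pick I j"] pkl unfolding y_def by auto
    then have "pick I i = pick I j" using dist pkl ij by (auto simp: nth_eq_iff_index_eq)
    show "i = j"
    proof (rule ccontr)
      assume "i \<noteq> j"
      then consider "i < j" | "j < i" by linarith
      then show False
      proof cases
        case 1
        then show False using pick_mono[where S=I and m=i and n=j] cI ij \<open>pick I i = pick I j\<close> by simp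
      next
        case 2
        then show False using pick_mono[where S=I and m=j and n=i] cI ij \<open>pick I i = pick I j\<close> by simp
      qed
    qed
  qed
  have "det M \<noteq> 0"
  proof
    assume "det M = 0"
    then obtain v where v: "v \<in> carrier_vec T" "v \<noteq> 0\<^sub>v T" "M *\<^sub>v v = 0\<^sub>v T"
      using det_0_iff_vec_prod_zero_field[OF Mc] by auto
    obtain jj where jj: "jj < T" "v $ jj \<noteq> 0" using v(1,2) by (auto simp: vec_eq_iff)
    have "card {z. (\<Sum>j\<in>{..<T}. v $ j * z ^ id j) = 0} < T"
      by (rule few_roots[where jj=jj]) (use jj in auto)
    moreover have "y ` {..<T} \<subseteq> {z. (\<Sum>j\<in>{..<T}. v $ j * z ^ id j) = 0}"
    proof safe
      fix i assume i: "i < T"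
      have "0 = (M *\<^sub>v v) $ i" using v(3) i by simp
      also have "\<dots> = (\<Sum>j<T. M $$ (i, j) * v $ j)"
        using Mc v(1) i by (simp add: scalar_prod_def atLeast0LessThan)
      also have "\<dots> = (\<rho> ! pick I i) ^ b * (\<Sum>j<T. v $ j * y i ^ j)"
        by (simp add: Mij i sum_distrib_left y_def mult_ac)
      finally have "(\<rho> ! pick I i) ^ b * (\<Sum>j<T. v $ j * y i ^ j) = 0" by simp
      moreover have "\<rho> ! pick I i \<noteq> 0"
      proof -
        have "(\<rho> ! pick I i) ^ q = 1" using rq nth_mem[OF pkl[OF i]] by blast
        then show ?thesis using q by (cases "\<rho> ! pick I i = 0") (simp_all add: power_0_left)
      qed
      ultimately show "(\<Sum>j\<in>{..<T}. v $ j * y i ^ id j) = 0" by simp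
    qed
    then have "card (y ` {..<T}) \<le> card {z. (\<Sum>j\<in>{..<T}. v $ j * z ^ id j) = 0}"
      by (rule card_mono[rotated]) simp
    ultimately show False using card_image[OF inj_y] by simp
  qed
  then have "invertible_mat M" by (rule det_ne0_invertible[OF Mc])
  then show ?thesis unfolding M_def V_def .
qed

lemma sumset_sub: "q > 0 \<Longrightarrow> sumset_mod q as bs \<subseteq> {..<q}"
  unfolding sumset_mod_def by auto

theorem lemma1:
  fixes q K L T :: nat
    and \<alpha>p \<beta>p :: "nat list"
    and b\<alpha> x\<alpha> b\<beta> x\<beta> :: nat
  assumes "q > 0" "K > 0" "L > 0" "T > 0"
    and "length \<alpha>p = K" "\<forall>a \<in> set \<alpha>p. a < q"
    and "length \<beta>p = L" "\<forall>b \<in> set \<beta>p. b < q"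
    and "coprime x\<alpha> q" "coprime x\<beta> q"
  defines "\<alpha>s \<equiv> arith_prog q b\<alpha> x\<alpha> T"
    and "\<beta>s \<equiv> arith_prog q b\<beta> x\<beta> T"
  defines "\<gamma> \<equiv> gamma_vec q \<alpha>p \<beta>p \<alpha>s \<beta>s"
  defines "N \<equiv> length \<gamma>"
  assumes "q dvd CARD('p::prime_card) - 1"
  shows "\<exists>\<rho> :: 'p mod_ring list.
           length \<rho> = N \<and> (\<forall>r \<in> set \<rho>. r ^ q = 1) \<and>
           invertible_mat (vandermonde_like \<rho> \<gamma>) \<and>
           (\<forall>I \<subseteq> {0..<N}. card I = T \<longrightarrow>
              invertible_mat (submatrix (vandermonde_like \<rho> \<alpha>s) I {0..<T}) \<and>
              invertible_mat (submatrix (vandermonde_like \<rho> \<beta>s) I {0..<T}))"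
proof -
  define S where "S = sumset_mod q \<alpha>p \<beta>p \<union> sumset_mod q \<alpha>p \<beta>s \<union> sumset_mod q \<alpha>s \<beta>p \<union> sumset_mod q \<alpha>s \<beta>s"
  have Ssub: "S \<subseteq> {..<q}" unfolding S_def using sumset_sub[OF assms(1)] by blast
  have finS: "finite S" by (rule finite_subset[OF Ssub]) simp
  have g: "\<gamma> = sorted_list_of_set S" unfolding \<gamma>_def gamma_vec_def S_def by simp
  have dist: "distinct \<gamma>" unfolding g by simp
  have setg: "set \<gamma> = S" unfolding g using finS by simp
  have lt: "\<forall>e\<in>set \<gamma>. e < q" using Ssub setg by auto
  have R: "q \<le> card {r::'p mod_ring. r ^ q = 1}" by (rule many_roots) (use assms in auto)
  obtain \<rho> :: "'p mod_ring list" where \<rho>: "length \<rho> = N" "\<forall>r\<in>set \<rho>. r ^ q = 1"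
    "det (vandermonde_like \<rho> (take N \<gamma>)) \<noteq> 0"
    using build_rows[OF dist lt R, of N] unfolding N_def by auto
  have d: "det (vandermonde_like \<rho> \<gamma>) \<noteq> 0" using \<rho>(3) unfolding N_def by simp
  have inv: "invertible_mat (vandermonde_like \<rho> \<gamma>)"
    by (rule det_ne0_invertible[OF _ d]) (use vdm_carrier[of \<rho> \<gamma>] \<rho>(1) N_def in simp)
  have dr: "distinct \<rho>" by (rule distinct_rows[OF d]) (use \<rho>(1) N_def in simp)
  show ?thesis
  proof (intro exI[of _ \<rho>] conjI allI impI)
    fix I assume I: "I \<subseteq> {0..<N}" "card I = T"
    show "invertible_mat (submatrix (vandermonde_like \<rho> \<alpha>s) I {0..<T})"
      unfolding \<alpha>s_def by (rule part_b[OF dr \<rho>(2) assms(1) assms(9)]) (use I \<rho>(1) in auto)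
    show "invertible_mat (submatrix (vandermonde_like \<rho> \<beta>s) I {0..<T})"
      unfolding \<beta>s_def by (rule part_b[OF dr \<rho>(2) assms(1) assms(10)]) (use I \<rho>(1) in auto)
  qed (use \<rho> inv in auto)
qed

end
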